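(* Fix $L\ge20$. For any pattern $(\mathbf a,\mathbf e)$ there exists $S\subseteq V(\Gamma)$ such that $p_{\mathrm{SD}}((\mathbf a,\mathbf e)_S)\ge p_{\mathrm{SD}}(\mathbf a,\mathbf e)-55L\sqrt d$ and, for all $(i,w)\in S$, \[\sum_{(i',w')\in N_{\Gamma_{\mathrm{SD}}}(i,w)\cap S}\frac{a_{i,w}a_{i',w'}}{n}\cdot\frac{\epsilon_{i,w,i',w'}^2}{15}\ge\frac L{10}\,a_{i,w}\log\Big(\frac{en}{a_{i,w}}\Big),\] where the right side is interpreted as $0$ when $a_{i,w}=0$.
   Context: $d\ge2$, $H$ is a $d$-regular graph on $[h]$. $D^{>0}=\{2^k/\sqrt{nh}:k\in\mathbb{Z},k\ge0\}$; $\Gamma$ is the graph on $[h]\times D^{>0}$ with $(i,w)\sim_\Gamma(i',w')$ iff $ii'\in E(H)$ and $w/w'\in(d^{-1/2},d^{1/2})$. A pattern is $(\mathbf a,\mathbf e)$: nonnegative integers $a_{i,w}$ with $\sum_wa_{i,w}\le n$ for each $i$, $\sum w^2a_{i,w}\le10$, some $w_0\in D^{>0}$ with $a_{i,w}=0$ unless $w_0\le w\le dw_0$; integers $e_{i,w,i',w'}$ for edges of $\Gamma$ (symmetric) with $0\le e\le\min(a_{i,w},a_{i',w'})$. Sub-pattern $(\mathbf a,\mathbf e)_S$: keep $a_{i,w}$ for $(i,w)\in S$ (else $0$) and $e$ on edges inside $S$ (else $0$). $\epsilon_{i,w,i',w'}=e_{i,w,i',w'}n/(a_{i,w}a_{i',w'})-1$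 if $a_{i,w},a_{i',w'}\ne0$, and $=1$ otherwise. $\Gamma_{\mathrm{SD}}=\Gamma_{\mathrm{SD}}(\mathbf a,\mathbf e)$ is the spanning subgraph of $\Gamma$ consisting of the edges with $-1\le\epsilon_{i,w,i',w'}\le e^2-1$, and $p_{\mathrm{SD}}(\mathbf a,\mathbf e)=\big|\sum_{(i,w)(i',w')\in E(\Gamma_{\mathrm{SD}})}\frac{ww'a_{i,w}a_{i',w'}}{n}\epsilon_{i,w,i',w'}\big|$ (with $\Gamma_{\mathrm{SD}}$ determined by the pattern in question). *)

theory Defs
  imports "HOL-Analysis.Analysis"
begin

text \<open>Vertices of Gamma: pairs (i,k) with i < h (i.e. i in [h] = {0..<h}) and k :: nat,
  where k encodes the weight w = 2^k / sqrt(n h) in D^{>0}.\<close>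

definition wt :: "nat \<Rightarrow> nat \<Rightarrow> nat \<Rightarrow> real" where
  "wt n h k = 2 ^ k / sqrt (real n * real h)"

definition regular_graph :: "nat \<Rightarrow> nat \<Rightarrow> (nat \<Rightarrow> nat \<Rightarrow> bool) \<Rightarrow> bool" where
  "regular_graph h d E \<longleftrightarrow>
     (\<forall>i j. E i j \<longrightarrow> i < h \<and> j < h) \<and> (\<forall>i j. E i j \<longrightarrow> E j i) \<and> (\<forall>i. \<not> E i i) \<and>
     (\<forall>i<h. card {j. E i j} = d)"

definition gamma_edge :: "(nat \<Rightarrow> nat \<Rightarrow> bool) \<Rightarrow> nat \<Rightarrow> nat \<Rightarrow> nat \<Rightarrow> nat \<times> nat \<Rightarrow> nat \<times> nat \<Rightarrow> bool" where
  "gamma_edge E d n h v v' \<longleftrightarrow>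
     E (fst v) (fst v') \<and>
     1 / sqrt (real d) < wt n h (snd v) / wt n h (snd v') \<and>
     wt n h (snd v) / wt n h (snd v') < sqrt (real d)"

definition is_pattern :: "(nat \<Rightarrow> nat \<Rightarrow> bool) \<Rightarrow> nat \<Rightarrow> nat \<Rightarrow> nat \<Rightarrow>
    (nat \<times> nat \<Rightarrow> nat) \<Rightarrow> (nat \<times> nat \<Rightarrow> nat \<times> nat \<Rightarrow> nat) \<Rightarrow> bool" where
  "is_pattern E d n h a e \<longleftrightarrow>
     (\<forall>i k. h \<le> i \<longrightarrow> a (i, k) = 0) \<and>
     (\<forall>i<h. (\<Sum>k | a (i, k) \<noteq> 0. a (i, k)) \<le> n) \<and>
     (\<Sum>v | a v \<noteq> 0. (wt n h (snd v))\<^sup>2 * real (a v)) \<le> 10 \<and>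
     (\<exists>k0. \<forall>v. a v \<noteq> 0 \<longrightarrow> wt n h k0 \<le> wt n h (snd v) \<and> wt n h (snd v) \<le> real d * wt n h k0) \<and>
     (\<forall>v v'. gamma_edge E d n h v v' \<longrightarrow> e v v' = e v' v \<and> e v v' \<le> min (a v) (a v'))"

definition sub_a :: "(nat \<times> nat) set \<Rightarrow> (nat \<times> nat \<Rightarrow> nat) \<Rightarrow> nat \<times> nat \<Rightarrow> nat" where
  "sub_a S a v = (if v \<in> S then a v else 0)"

definition sub_e :: "(nat \<times> nat) set \<Rightarrow> (nat \<times> nat \<Rightarrow> nat \<times> nat \<Rightarrow> nat) \<Rightarrow> nat \<times> nat \<Rightarrow> nat \<times> nat \<Rightarrow> nat" where
  "sub_e S e v v' = (if v \<in> S \<and> v' \<in> S then e v v' else 0)"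

definition eps :: "nat \<Rightarrow> (nat \<times> nat \<Rightarrow> nat) \<Rightarrow> (nat \<times> nat \<Rightarrow> nat \<times> nat \<Rightarrow> nat) \<Rightarrow> nat \<times> nat \<Rightarrow> nat \<times> nat \<Rightarrow> real" where
  "eps n a e v v' = (if a v \<noteq> 0 \<and> a v' \<noteq> 0
      then real (e v v') * real n / (real (a v) * real (a v')) - 1 else 1)"

definition sd_edge :: "(nat \<Rightarrow> nat \<Rightarrow> bool) \<Rightarrow> nat \<Rightarrow> nat \<Rightarrow> nat \<Rightarrow>
    (nat \<times> nat \<Rightarrow> nat) \<Rightarrow> (nat \<times> nat \<Rightarrow> nat \<times> nat \<Rightarrow> nat) \<Rightarrow> nat \<times> nat \<Rightarrow> nat \<times> nat \<Rightarrow> bool" where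
  "sd_edge E d n h a e v v' \<longleftrightarrow> gamma_edge E d n h v v' \<and>
     -1 \<le> eps n a e v v' \<and> eps n a e v v' \<le> (exp 1)\<^sup>2 - 1"

text \<open>p_SD: sum over (unordered) edges of Gamma_SD, written as half the sum over ordered pairs.\<close>
definition p_SD :: "(nat \<Rightarrow> nat \<Rightarrow> bool) \<Rightarrow> nat \<Rightarrow> nat \<Rightarrow> nat \<Rightarrow>
    (nat \<times> nat \<Rightarrow> nat) \<Rightarrow> (nat \<times> nat \<Rightarrow> nat \<times> nat \<Rightarrow> nat) \<Rightarrow> real" where
  "p_SD E d n h a e = \<bar>(1/2) * (\<Sum>\<^sub>\<infinity>(v, v') \<in> {(v, v'). sd_edge E d n h a e v v'}.
       wt n h (snd v) * wt n h (snd v') * real (a v) * real (a v') / real n * eps n a e v v')\<bar>"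

end

theory Submission
  imports Defs
begin


definition phi :: "real \<Rightarrow> real" where "phi x = x * sqrt (ln (exp 1 / x))"

lemma phi_sq: "0 < x \<Longrightarrow> x \<le> 1 \<Longrightarrow> (phi x)^2 = x^2 * (1 - ln x)"
proof -
  assume x: "0 < x" "x \<le> 1"
  have "ln (exp 1 / x) = 1 - ln x" using x by (simp add: ln_div)
  moreover have "ln x \<le> 0" using x by simp
  ultimately show ?thesis unfolding phi_def by (simp add: power_mult_distrib)
qed

lemma phi_nonneg: "0 \<le> x \<Longrightarrow> x \<le> 1 \<Longrightarrow> 0 \<le> phi x"
proof -
  assume x: "0 \<le> x" "x \<le> 1"
  show ?thesis
  proof (cases "x = 0")
    case False
    have "x \<le> exp 1" using x exp_ge_add_one_self[of 1] by linarith
    hence "1 \<le> exp 1 / x" using x False by (simp add: field_simps)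
    thus ?thesis unfolding phi_def using x by simp
  qed (simp add: phi_def)
qed

lemma phi_mono: assumes "0 \<le> x" "x \<le> y" "y \<le> 1" shows "phi x \<le> phi y"
proof (cases "x = 0")
  case True thus ?thesis using assms phi_nonneg[of y] by (simp add: phi_def)
next
  case False
  hence x: "0 < x" using assms by simp
  hence y: "0 < y" using assms by simp
  have l1: "ln y - ln x \<le> (y - x) / x"
    using ln_le_minus_one[of "y/x"] x y by (simp add: ln_div field_simps)
  have "x * (ln y - ln x) \<le> y - x" using l1 x by (simp add: field_simps)
  hence "x * (x * (ln y - ln x)) \<le> x * (y - x)" using x by (simp add: mult_left_mono)
  hence "x^2 * (ln y - ln x) \<le> x * (y - x)" by (simp add: power2_eq_square mult.assoc)
  moreover have "ln y \<le> 0" using y assms by simp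
  moreover have "(y^2 - x^2) \<le> (y^2 - x^2) * (1 - ln y)"
  proof -
    have "0 \<le> y^2 - x^2" using power_mono[of x y 2] assms by simp
    thus ?thesis using mult_left_mono[of 1 "1 - ln y" "y^2 - x^2"] \<open>ln y \<le> 0\<close> by simp
  qed
  moreover have "x * (y - x) \<le> y^2 - x^2" using assms x by (simp add: power2_eq_square algebra_simps)
  ultimately have "x^2 * (1 - ln x) \<le> y^2 * (1 - ln y)" by (simp add: algebra_simps)
  hence "(phi x)^2 \<le> (phi y)^2" using phi_sq x y assms by simp
  thus ?thesis using phi_nonneg[of y] assms y by (simp add: power2_le_iff_abs_le)
qed

lemma phi_le1: "0 \<le> x \<Longrightarrow> x \<le> 1 \<Longrightarrow> phi x \<le> 1"
  using phi_mono[of x 1] by (simp add: phi_def)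

definition GG :: "real \<Rightarrow> nat \<Rightarrow> real" where
  "GG s k = sqrt (2^k / s) / (1 + sqrt (2^k / s))"

lemma sqrt2_bounds: "1.41 < sqrt (2::real)" "sqrt (2::real) < 1.42"
proof -
  show "1.41 < sqrt (2::real)" by (rule real_less_rsqrt) (simp add: power2_eq_square)
  have "sqrt (2::real) < sqrt (1.42^2)" by (subst real_sqrt_less_iff) (simp add: power2_eq_square)
  thus "sqrt (2::real) < 1.42" by simp
qed

lemma pointwise:
  assumes s: "s > 0" and a: "0 \<le> x" "x \<le> 1" and b: "4^k * x \<le> s^2"
  shows "2^k * phi x \<le> 13 * sqrt 2 * s * (GG s (Suc k) - GG s k)"
proof -
  define q where "q = sqrt (2::real)"
  have q2: "q * q = 2" unfolding q_def by simp
  have qb: "1.41 < q" "q < 1.42" using sqrt2_bounds unfolding q_def by auto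
  define t where "t = sqrt (2^k / s)"
  have t0: "t > 0" unfolding t_def using s by simp
  have tt: "t * t = 2^k / s" unfolding t_def using s by simp
  have k2: "2^k = s * (t * t)" using tt s by (simp add: field_simps)
  have st: "sqrt (2 ^ Suc k / s) = q * t"
    unfolding t_def q_def by (simp add: real_sqrt_mult[symmetric] mult.assoc)
  have dG: "GG s (Suc k) - GG s k = (q - 1) * t / ((1 + t) * (1 + q * t))"
  proof -
    have n1: "1 + q * t \<noteq> 0" "1 + t \<noteq> 0" proof -
      have "0 < q * t" using t0 qb by simp
      thus "1 + q * t \<noteq> 0" by linarith
      show "1 + t \<noteq> 0" using t0 by linarith
    qed
    show ?thesis unfolding GG_def st t_def[symmetric] using n1
      by (simp add: field_simps)
  qed
  have pos: "0 < (1 + t) * (1 + q * t)" using t0 qb by (simp add: add_pos_pos)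
  have "2^k * phi x \<le> q * s * 13 * (q - 1) * t / ((1 + t) * (1 + q * t))"
  proof (cases "t \<le> 1")
    case True
    have "2^k * phi x \<le> 2^k * 1" using phi_le1[OF a] by (intro mult_left_mono) auto
    also have "\<dots> = s * (t * t)" using k2 by simp
    also have "\<dots> \<le> q * s * 13 * (q - 1) * t / ((1 + t) * (1 + q * t))"
    proof -
      have "(1 + t) * (1 + q * t) \<le> 2 * (1 + q)"
        using True t0 qb by (intro mult_mono) auto
      moreover have "t * ((1 + t) * (1 + q * t)) \<le> 1 * ((1 + t) * (1 + q * t))"
        using True pos by (intro mult_right_mono) auto
      ultimately have "t * ((1 + t) * (1 + q * t)) \<le> 1 * (2 * (1 + q))" by simp
      also have "\<dots> \<le> 13 * q * (q - 1)" using q2 qb by (simp add: algebra_simps)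
      finally have h: "t * ((1 + t) * (1 + q * t)) \<le> 13 * q * (q - 1)" .
      have "s * (t * t) * ((1 + t) * (1 + q * t)) = (s * t) * (t * ((1 + t) * (1 + q * t)))" by simp
      also have "\<dots> \<le> (s * t) * (13 * q * (q - 1))"
        using h s t0 by (intro mult_left_mono) auto
      finally show ?thesis using pos by (simp add: field_simps)
    qed
    finally show ?thesis .
  next
    case False
    hence t1: "t \<ge> 1" by simp
    have "(4::real)^k = (2 * 2)^k" by simp
    hence "4^k = (2::real)^k * 2^k" by (simp only: power_mult_distrib)
    hence 4: "(4::real)^k = s^2 * (t*t*t*t)" using k2 by (simp add: power2_eq_square)
    have "(s * s * (t * t * t * t)) * x \<le> s * s" using b 4 by (simp add: power2_eq_square)
    hence "(t*t*t*t) * x \<le> 1" using s by (simp add: mult.assoc mult_le_cancel_left1)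
    moreover have "0 < t*t*t*t" using t0 by simp
    ultimately have xle: "x \<le> 1 / (t*t*t*t)" by (simp add: pos_le_divide_eq mult.commute)
    have "1 \<le> t*t" using t1 mult_mono[OF t1 t1] by simp
    hence "1 \<le> (t*t)*(t*t)" using mult_mono[of 1 "t*t" 1 "t*t"] by simp
    hence u1: "1 / (t*t*t*t) \<le> 1" by (simp add: mult.assoc)
    have "phi x \<le> phi (1 / (t*t*t*t))" using phi_mono[OF a(1) xle u1] .
    also have "\<dots> = 1 / (t*t*t*t) * sqrt (1 + 4 * ln t)"
    proof -
      have "ln (exp 1 / (1 / (t*t*t*t))) = 1 + 4 * ln t" using t0 by (simp add: ln_mult)
      thus ?thesis unfolding phi_def by simp
    qed
    also have "\<dots> \<le> 1 / (t*t*t*t) * (q * t)"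
    proof -
      have "ln t \<le> t - 1" using ln_le_minus_one t0 by simp
      moreover have "0 \<le> (t - 1) * (t - 1)" by simp
      ultimately have "1 + 4 * ln t \<le> 2 * (t * t)" by (simp add: algebra_simps)
      moreover have "(q*t)^2 = (q*q)*(t*t)" by (simp add: power2_eq_square algebra_simps)
      ultimately have "1 + 4 * ln t \<le> (q*t)^2" using q2 by simp
      hence "sqrt (1 + 4 * ln t) \<le> q * t" using qb t0 by (simp add: real_sqrt_le_iff real_le_lsqrt del: real_sqrt_le_iff)
      thus ?thesis using t0 by (intro mult_left_mono) auto
    qed
    finally have px: "phi x \<le> q / (t*t*t)" using t0 by (simp add: field_simps)
    have "2^k * phi x \<le> s * (t * t) * (q / (t*t*t))" unfolding k2 using px s t0 by (intro mult_left_mono) auto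
    also have "\<dots> = q * s / t" using t0 by (simp add: field_simps)
    also have "\<dots> \<le> q * s * 13 * (q - 1) * t / ((1 + t) * (1 + q * t))"
    proof -
      have "(1 + t) * (1 + q * t) \<le> (2*t) * ((1 + q) * t)"
        using t1 qb by (intro mult_mono) (auto simp: algebra_simps)
      also have "\<dots> = 2 * (1 + q) * (t * t)" by simp
      also have "\<dots> \<le> 13 * (q - 1) * (t * t)" using qb t0 by (intro mult_right_mono) auto
      finally have h: "(1 + t) * (1 + q * t) \<le> 13 * (q - 1) * (t * t)" .
      have "q * s * ((1 + t) * (1 + q * t)) \<le> q * s * (13 * (q - 1) * (t * t))"
        using h qb s by (intro mult_left_mono) auto
      thus ?thesis using pos t0 by (simp add: field_simps)
    qed
    finally show ?thesis .
  qed
  also have "\<dots> = 13 * sqrt 2 * s * (GG s (Suc k) - GG s k)"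
    unfolding dG q_def by (simp add: field_simps)
  finally show ?thesis .
qed

lemma GG_mono: assumes "s > 0" shows "GG s k \<le> GG s (Suc k)"
proof -
  have "sqrt (2^k / s) \<le> sqrt (2^Suc k / s)" using assms by (simp add: divide_right_mono)
  moreover have "\<And>x y::real. 0 \<le> x \<Longrightarrow> x \<le> y \<Longrightarrow> x / (1 + x) \<le> y / (1 + y)"
    by (simp add: field_simps)
  ultimately show ?thesis unfolding GG_def by simp
qed

lemma GG_bounds: assumes "s > 0" shows "0 \<le> GG s k" "GG s k \<le> 1"
proof -
  define x where "x = sqrt (2^k / s)"
  have "0 \<le> x" unfolding x_def using assms by simp
  hence "0 \<le> x / (1 + x)" "x / (1 + x) \<le> 1" by (auto simp: field_simps)
  thus "0 \<le> GG s k" "GG s k \<le> 1" unfolding GG_def x_def by auto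
qed

lemma per_i:
  assumes K: "finite K" and al: "\<And>k. k \<in> K \<Longrightarrow> 0 \<le> al k \<and> al k \<le> 1"
  shows "(\<Sum>k\<in>K. 2^k * phi (al k)) \<le> 13 * sqrt 2 * sqrt (\<Sum>k\<in>K. 4^k * al k)"
proof -
  define X where "X = (\<Sum>k\<in>K. (4::real)^k * al k)"
  have X0: "X \<ge> 0" unfolding X_def using al by (intro sum_nonneg) auto
  show ?thesis
  proof (cases "X = 0")
    case True
    hence "\<forall>k\<in>K. 4^k * al k = 0" using sum_nonneg_eq_0_iff[OF K, of "\<lambda>k. 4^k * al k"] al unfolding X_def
      by auto
    hence "\<forall>k\<in>K. al k = 0" by simp
    thus ?thesis by (simp add: phi_def)
  next
    case False
    define s where "s = sqrt X"
    have s0: "s > 0" unfolding s_def using X0 False by simp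
    have ss: "s^2 = X" unfolding s_def using X0 by simp
    have pw: "2^k * phi (al k) \<le> 13 * sqrt 2 * s * (GG s (Suc k) - GG s k)" if k: "k \<in> K" for k
    proof (rule pointwise[OF s0])
      show "0 \<le> al k" "al k \<le> 1" using al k by auto
      show "4^k * al k \<le> s^2" unfolding ss X_def
        using member_le_sum[OF k, of "\<lambda>k. 4^k * al k"] al K by auto
    qed
    obtain N where N: "K \<subseteq> {..<N}" using K finite_nat_iff_bounded by auto
    have "(\<Sum>k\<in>K. 2^k * phi (al k)) \<le> (\<Sum>k\<in>K. 13 * sqrt 2 * s * (GG s (Suc k) - GG s k))"
      using pw by (rule sum_mono)
    also have "\<dots> \<le> (\<Sum>k<N. 13 * sqrt 2 * s * (GG s (Suc k) - GG s k))"
      using N GG_mono[OF s0] s0 by (intro sum_mono2) auto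
    also have "\<dots> = 13 * sqrt 2 * s * (GG s N - GG s 0)"
      by (simp add: sum_distrib_left[symmetric] sum_lessThan_telescope)
    also have "\<dots> \<le> 13 * sqrt 2 * s * 1"
      using GG_bounds[OF s0, of N] GG_bounds[OF s0, of 0] s0 by (intro mult_left_mono) auto
    finally show ?thesis unfolding s_def X_def by simp
  qed
qed



definition FF :: "('v \<Rightarrow> 'v \<Rightarrow> bool) \<Rightarrow> ('v \<Rightarrow> 'v \<Rightarrow> real) \<Rightarrow> 'v set \<Rightarrow> real" where
  "FF sd t U = (\<Sum>x\<in>U. \<Sum>y\<in>U. if sd x y then t x y else 0)"

lemma FF_remove:
  assumes U: "finite U" and v: "v \<in> U"
    and irr: "\<And>x. \<not> sd x x" and sym: "\<And>x y. sd x y \<Longrightarrow> sd y x \<and> t x y = t y x"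
  shows "FF sd t U = FF sd t (U - {v}) + 2 * (\<Sum>y\<in>U. if sd v y then t v y else 0)"
proof -
  let ?g = "\<lambda>x y. if sd x y then t x y else 0"
  have sg: "?g x y = ?g y x" for x y
  proof (cases "sd x y")
    case True thus ?thesis using sym[OF True] by simp
  next
    case False
    hence "\<not> sd y x" using sym by blast
    thus ?thesis using False by simp
  qed
  have "FF sd t U = (\<Sum>y\<in>U. ?g v y) + (\<Sum>x\<in>U - {v}. \<Sum>y\<in>U. ?g x y)"
    unfolding FF_def by (rule sum.remove[OF U v])
  also have "(\<Sum>x\<in>U - {v}. \<Sum>y\<in>U. ?g x y) = (\<Sum>x\<in>U - {v}. ?g x v + (\<Sum>y\<in>U - {v}. ?g x y))"
    by (intro sum.cong refl) (simp add: sum.remove[OF U v])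
  also have "\<dots> = (\<Sum>x\<in>U - {v}. ?g v x) + FF sd t (U - {v})"
    unfolding FF_def sum.distrib using sg by simp
  also have "(\<Sum>x\<in>U - {v}. ?g v x) = (\<Sum>x\<in>U. ?g v x)"
    using U v irr by (simp add: sum.remove)
  finally show ?thesis by simp
qed

lemma core:
  assumes B: "finite B"
    and irr: "\<And>x. \<not> sd x x" and sym: "\<And>x y. sd x y \<Longrightarrow> sd y x \<and> t x y = t y x"
    and Phi0: "\<And>v. 0 \<le> Phi v"
    and step: "\<And>U v. U \<subseteq> B \<Longrightarrow> v \<in> U \<Longrightarrow> \<not> good U v \<Longrightarrow>
                 \<bar>\<Sum>y\<in>U. if sd v y then t v y else 0\<bar> \<le> Phi v"
  shows "U \<subseteq> B \<Longrightarrow> \<exists>S \<subseteq> U. (\<forall>v\<in>S. good S v) \<and>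
            \<bar>FF sd t U - FF sd t S\<bar> \<le> 2 * (\<Sum>v\<in>U - S. Phi v)"
proof (induction "card U" arbitrary: U rule: less_induct)
  case less
  have U: "finite U" using less.prems B finite_subset by auto
  show ?case
  proof (cases "\<forall>v\<in>U. good U v")
    case True thus ?thesis by (intro exI[of _ U]) auto
  next
    case False
    then obtain v where v: "v \<in> U" "\<not> good U v" by auto
    have "card U > 0" using U v card_gt_0_iff by blast
    hence "card (U - {v}) < card U" using U v by simp
    then obtain S where S: "S \<subseteq> U - {v}" "\<forall>v\<in>S. good S v"
      "\<bar>FF sd t (U - {v}) - FF sd t S\<bar> \<le> 2 * (\<Sum>v\<in>U - {v} - S. Phi v)"
      using less.hyps[of "U - {v}"] less.prems by auto
    have r: "\<bar>\<Sum>y\<in>U. if sd v y then t v y else 0\<bar> \<le> Phi v" using step less.prems v by auto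
    have e: "U - S = insert v (U - {v} - S)" using S v by auto
    have "(\<Sum>w\<in>U - S. Phi w) = Phi v + (\<Sum>w\<in>U - {v} - S. Phi w)"
      unfolding e using U by (subst sum.insert) auto
    moreover have "FF sd t U = FF sd t (U - {v}) + 2 * (\<Sum>y\<in>U. if sd v y then t v y else 0)"
      by (rule FF_remove[OF U v(1)]) (use irr sym in blast)+
    ultimately have "\<bar>FF sd t U - FF sd t S\<bar> \<le> 2 * (\<Sum>w\<in>U - S. Phi w)"
      using S(3) r by (simp add: abs_le_iff)
    thus ?thesis using S by (intro exI[of _ S]) auto
  qed
qed



lemma infsum_pairs:
  fixes g :: "'v \<Rightarrow> 'v \<Rightarrow> real"
  assumes A: "finite A" and z: "\<And>v v'. P v v' \<Longrightarrow> \<not> (v \<in> A \<and> v' \<in> A) \<Longrightarrow> g v v' = 0"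
  shows "(\<Sum>\<^sub>\<infinity>(v, v')\<in>{(v, v'). P v v'}. g v v') = FF P g A"
proof -
  have "(\<Sum>\<^sub>\<infinity>(v, v')\<in>{(v, v'). P v v'}. g v v') = (\<Sum>\<^sub>\<infinity>(v, v')\<in>{p\<in>A\<times>A. P (fst p) (snd p)}. g v v')"
    by (rule infsum_cong_neutral) (use z in auto)
  also have "\<dots> = (\<Sum>(v, v')\<in>{p\<in>A\<times>A. P (fst p) (snd p)}. g v v')"
    using A by (intro infsum_finite) auto
  also have "\<dots> = (\<Sum>p\<in>A\<times>A. if P (fst p) (snd p) then g (fst p) (snd p) else 0)"
    using A by (subst sum.inter_filter) (auto simp: case_prod_unfold intro!: sum.cong)
  also have "\<dots> = FF P g A" unfolding FF_def by (simp add: sum.cartesian_product split_beta)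
  finally show ?thesis .
qed

context
  fixes d h n :: nat and L :: real and E :: "nat \<Rightarrow> nat \<Rightarrow> bool"
    and a :: "nat \<times> nat \<Rightarrow> nat" and e :: "nat \<times> nat \<Rightarrow> nat \<times> nat \<Rightarrow> nat"
  assumes d2: "d \<ge> 2"
    and reg: "regular_graph h d E"
    and L20: "L \<ge> 20"
    and pat: "is_pattern E d n h a e"
    and npos: "n > 0" and hpos: "h > 0"
begin

definition "cc = 1 / sqrt (real n * real h)"

lemma cc_pos: "cc > 0" unfolding cc_def using npos hpos by simp

lemma wt_eq: "wt n h k = 2^k * cc" unfolding wt_def cc_def by simp

lemma wt_pos: "wt n h k > 0" using cc_pos wt_eq by simp

definition "k0 = (SOME k0. \<forall>v. a v \<noteq> 0 \<longrightarrow> wt n h k0 \<le> wt n h (snd v) \<and> wt n h (snd v) \<le> real d * wt n h k0)"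

definition "KK = {k0..<k0+d}"
definition "BB = {0..<h} \<times> KK"

lemma BB_fin: "finite BB" unfolding BB_def KK_def by simp

lemma supp_BB: assumes "a v \<noteq> 0" shows "v \<in> BB"
proof -
  have ex: "\<exists>k0. \<forall>v. a v \<noteq> 0 \<longrightarrow> wt n h k0 \<le> wt n h (snd v) \<and> wt n h (snd v) \<le> real d * wt n h k0"
    using pat unfolding is_pattern_def by blast
  have k: "wt n h k0 \<le> wt n h (snd v)" "wt n h (snd v) \<le> real d * wt n h k0"
    using someI_ex[OF ex] assms unfolding k0_def[symmetric] by blast+
  have "(2::real)^k0 \<le> 2^(snd v)" using k(1) cc_pos unfolding wt_eq by simp
  hence 1: "k0 \<le> snd v" by simp
  have "(2::real)^(snd v) \<le> real d * 2^k0" using k(2) cc_pos unfolding wt_eq by simp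
  also have "\<dots> < 2^d * 2^k0"
  proof -
    have "real d < real (2^d)" using less_exp[of d] by (simp only: of_nat_less_iff)
    hence "real d < 2^d" by simp
    thus ?thesis by (intro mult_strict_right_mono) auto
  qed
  also have "\<dots> = 2^(k0+d)" by (simp add: power_add)
  finally have 2: "snd v < k0 + d" by simp
  have "fst v < h" using assms pat unfolding is_pattern_def by (metis not_le prod.collapse)
  thus ?thesis using 1 2 unfolding BB_def KK_def by (cases v) auto
qed

lemma supp_BB': "v \<notin> BB \<Longrightarrow> a v = 0" using supp_BB by blast

lemma a_le_n: "a v \<le> n"
proof (cases "a v = 0")
  case False
  hence v: "v \<in> BB" by (rule supp_BB)
  obtain i k where ik: "v = (i,k)" by (cases v)
  have i: "i < h" using v ik unfolding BB_def by auto
  have fin: "finite {k. a (i,k) \<noteq> 0}"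
    by (rule finite_subset[of _ KK]) (use supp_BB in \<open>auto simp: BB_def KK_def\<close>)
  have "a (i,k) \<le> (\<Sum>k | a (i, k) \<noteq> 0. a (i, k))"
    using False ik by (intro member_le_sum fin) auto
  also have "\<dots> \<le> n" using pat i unfolding is_pattern_def by blast
  finally show ?thesis using ik by simp
qed simp

abbreviation "sd \<equiv> sd_edge E d n h a e"

lemma E_sym: "E i j \<Longrightarrow> E j i" using reg unfolding regular_graph_def by blast
lemma E_irr: "\<not> E i i" using reg unfolding regular_graph_def by blast
lemma E_bd: "E i j \<Longrightarrow> i < h \<and> j < h" using reg unfolding regular_graph_def by blast

lemma gamma_sym: assumes "gamma_edge E d n h x y" shows "gamma_edge E d n h y x"
proof -
  define r where "r = wt n h (snd x) / wt n h (snd y)"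
  have r0: "r > 0" unfolding r_def using wt_pos by simp
  have rr: "wt n h (snd y) / wt n h (snd x) = 1 / r" unfolding r_def by simp
  have sq: "sqrt (real d) > 0" using d2 by simp
  have "1 / sqrt d < r" "r < sqrt d" using assms unfolding gamma_edge_def r_def by auto
  hence "1 / sqrt d < 1 / r" "1 / r < sqrt d" using r0 sq by (auto simp: field_simps)
  thus ?thesis using assms E_sym unfolding gamma_edge_def rr by auto
qed

lemma sd_irr: "\<not> sd x x" unfolding sd_edge_def gamma_edge_def using E_irr by auto

definition "tt v y = wt n h (snd v) * wt n h (snd y) * real (a v) * real (a y) / real n * eps n a e v y"

lemma sd_sym: "sd x y \<Longrightarrow> sd y x \<and> tt x y = tt y x"
proof -
  assume s: "sd x y"
  hence g: "gamma_edge E d n h x y" unfolding sd_edge_def by auto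
  have ee: "e x y = e y x" using pat g unfolding is_pattern_def by blast
  have eps: "eps n a e x y = eps n a e y x" unfolding eps_def using ee by (auto simp: mult.commute)
  show ?thesis using s gamma_sym[OF g] eps unfolding sd_edge_def tt_def by (auto simp: mult_ac)
qed

definition "DD U v = (\<Sum>y\<in>U. if sd v y then real (a v) * real (a y) / real n * (eps n a e v y)^2 / 15 else 0)"
definition "TT v = (if a v = 0 then 0 else L / 10 * real (a v) * ln (exp 1 * real n / real (a v)))"
definition "MM i = (\<Sum>k\<in>KK. (wt n h k)^2 * real (a (i,k)))"
definition "YY i = (\<Sum>j<h. if E i j then MM j else 0)"
definition "Phi v = sqrt (3/2 * L) * sqrt (YY (fst v) / real n) * wt n h (snd v) * real n * phi (real (a v) / real n)"

lemma MM_nonneg: "0 \<le> MM i" unfolding MM_def by (intro sum_nonneg) auto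
lemma YY_nonneg: "0 \<le> YY i" unfolding YY_def using MM_nonneg by (intro sum_nonneg) auto

lemma al_bounds: "0 \<le> real (a v) / real n" "real (a v) / real n \<le> 1"
  using a_le_n[of v] npos by auto

lemma Phi_nonneg: "0 \<le> Phi v"
  unfolding Phi_def using YY_nonneg wt_pos[THEN less_imp_le] phi_nonneg[OF al_bounds] L20 by (intro mult_nonneg_nonneg) auto

lemma DD_nonneg: "0 \<le> DD U v" unfolding DD_def by (intro sum_nonneg) auto

lemma sum_BB_E: "(\<Sum>y\<in>BB. if E i (fst y) then f y else 0) = (\<Sum>j<h. if E i j then (\<Sum>k\<in>KK. f (j,k)) else 0)"
proof -
  have "(\<Sum>j<h. if E i j then (\<Sum>k\<in>KK. f (j,k)) else 0) = (\<Sum>j<h. \<Sum>k\<in>KK. if E i j then f (j,k) else 0)"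
    by (intro sum.cong) auto
  also have "\<dots> = (\<Sum>(j,k)\<in>{..<h}\<times>KK. if E i j then f (j,k) else 0)" by (rule sum.cartesian_product)
  also have "\<dots> = (\<Sum>y\<in>BB. if E i (fst y) then f y else 0)" unfolding BB_def atLeast0LessThan
    by (intro sum.cong) auto
  finally show ?thesis by simp
qed

lemma step:
  assumes U: "U \<subseteq> BB" and v: "v \<in> U" and ng: "\<not> TT v \<le> DD U v"
  shows "\<bar>\<Sum>y\<in>U. if sd v y then tt v y else 0\<bar> \<le> Phi v"
proof -
  have Uf: "finite U" using U BB_fin finite_subset by auto
  have av: "a v \<noteq> 0"
  proof
    assume "a v = 0" hence "TT v = 0" unfolding TT_def by simp
    thus False using ng DD_nonneg[of U v] by simp
  qed
  define w where "w = wt n h (snd v)"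
  define q where "q = (\<lambda>y. real (a v) * real (a y) / real n)"
  have q0: "0 \<le> q y" for y unfolding q_def by simp
  define x where "x = (\<lambda>y. if sd v y then eps n a e v y * sqrt (q y) else 0)"
  define z where "z = (\<lambda>y. if sd v y then w * wt n h (snd y) * sqrt (q y) else 0)"
  have xz: "(if sd v y then tt v y else 0) = x y * z y" for y
  proof -
    have ss: "sqrt (q y) * sqrt (q y) = q y" using q0[of y] by simp
    have "x y * z y = (if sd v y then eps n a e v y * (w * wt n h (snd y)) * (sqrt (q y) * sqrt (q y)) else 0)"
      unfolding x_def z_def by (simp add: mult_ac)
    also have "\<dots> = (if sd v y then tt v y else 0)" unfolding ss unfolding q_def tt_def w_def by simp
    finally show ?thesis by simp
  qed
  have sx: "(\<Sum>y\<in>U. (x y)^2) = 15 * DD U v"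
    unfolding DD_def sum_distrib_left x_def using q0 by (intro sum.cong) (auto simp: power_mult_distrib q_def)
  have "(\<Sum>y\<in>U. (z y)^2) = (\<Sum>y\<in>U. if sd v y then w^2 * (wt n h (snd y))^2 * q y else 0)"
    unfolding z_def using q0 by (intro sum.cong) (auto simp: power_mult_distrib)
  also have "\<dots> \<le> (\<Sum>y\<in>BB. if E (fst v) (fst y) then w^2 * (wt n h (snd y))^2 * q y else 0)"
  proof -
    have "(\<Sum>y\<in>U. if sd v y then w^2 * (wt n h (snd y))^2 * q y else 0)
       \<le> (\<Sum>y\<in>U. if E (fst v) (fst y) then w^2 * (wt n h (snd y))^2 * q y else 0)"
      using q0 by (intro sum_mono) (auto simp: sd_edge_def gamma_edge_def)
    also have "\<dots> \<le> (\<Sum>y\<in>BB. if E (fst v) (fst y) then w^2 * (wt n h (snd y))^2 * q y else 0)"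
      using q0 by (intro sum_mono2[OF BB_fin U]) auto
    finally show ?thesis .
  qed
  finally have sz0: "(\<Sum>y\<in>U. (z y)^2) \<le> (\<Sum>y\<in>BB. if E (fst v) (fst y) then w^2 * (wt n h (snd y))^2 * q y else 0)" .
  have "(\<Sum>y\<in>BB. if E (fst v) (fst y) then w^2 * (wt n h (snd y))^2 * q y else 0)
      = (\<Sum>j<h. if E (fst v) j then (\<Sum>k\<in>KK. w^2 * (wt n h k)^2 * q (j,k)) else 0)"
    by (rule trans[OF sum_BB_E[of "fst v" "\<lambda>y. w^2 * (wt n h (snd y))^2 * q y"]]) (simp only: snd_conv)
  also have "\<dots> = (\<Sum>j<h. (w^2 * real (a v) / real n) * (if E (fst v) j then MM j else 0))"
    unfolding MM_def q_def by (intro sum.cong refl) (auto simp: sum_distrib_left sum_divide_distrib mult_ac)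
  also have "\<dots> = w^2 * real (a v) / real n * YY (fst v)" unfolding YY_def by (simp add: sum_distrib_left)
  finally have sz: "(\<Sum>y\<in>U. (z y)^2) \<le> w^2 * real (a v) / real n * YY (fst v)" using sz0 by simp
  have "(\<Sum>y\<in>U. if sd v y then tt v y else 0)^2 = (\<Sum>y\<in>U. x y * z y)^2" using xz by simp
  also have "\<dots> \<le> (\<Sum>y\<in>U. (x y)^2) * (\<Sum>y\<in>U. (z y)^2)" by (rule Cauchy_Schwarz_ineq_sum)
  also have "\<dots> \<le> (15 * TT v) * (w^2 * real (a v) / real n * YY (fst v))"
    unfolding sx using ng sz DD_nonneg[of U v] YY_nonneg
    by (intro mult_mono) (auto intro: sum_nonneg)
  also have "\<dots> = (Phi v)^2"
  proof -
    define al where "al = real (a v) / real n"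
    have al: "0 < al" "al \<le> 1" using al_bounds[of v] av npos unfolding al_def by auto
    have lnv: "ln (exp 1 * real n / real (a v)) = 1 - ln al"
      unfolding al_def using av npos by (simp add: ln_mult ln_div)
    have av': "real (a v) = al * real n" unfolding al_def using npos by simp
    have "(Phi v)^2 = (3/2 * L) * (YY (fst v) / real n) * w^2 * (real n)^2 * (phi al)^2"
      unfolding Phi_def w_def al_def using L20 YY_nonneg[of "fst v"] npos
      by (simp add: power_mult_distrib)
    also have "\<dots> = (3/2 * L) * (YY (fst v) / real n) * w^2 * (real n)^2 * (al^2 * (1 - ln al))"
      using phi_sq[OF al] by simp
    also have "\<dots> = (15 * TT v) * (w^2 * real (a v) / real n * YY (fst v))"
      unfolding TT_def lnv using av npos by (simp add: av' power2_eq_square field_simps)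
    finally show ?thesis by simp
  qed
  finally show ?thesis using Phi_nonneg[of v] by (simp add: power2_le_iff_abs_le)
qed

lemma card_nbr: "j < h \<Longrightarrow> card {i\<in>{..<h}. E i j} = d"
proof -
  assume j: "j < h"
  have "{i\<in>{..<h}. E i j} = {i. E j i}" using E_sym E_bd by auto
  thus ?thesis using reg j unfolding regular_graph_def by auto
qed

lemma sum_YY: "(\<Sum>i<h. YY i) = real d * (\<Sum>i<h. MM i)"
proof -
  have "(\<Sum>i<h. YY i) = (\<Sum>j<h. \<Sum>i<h. if E i j then MM j else 0)"
    unfolding YY_def by (rule sum.swap)
  also have "\<dots> = (\<Sum>j<h. real d * MM j)"
  proof (intro sum.cong refl)
    fix j assume "j \<in> {..<h}"
    hence j: "j < h" by simp
    have "(\<Sum>i<h. if E i j then MM j else 0) = (\<Sum>i\<in>{i\<in>{..<h}. E i j}. MM j)"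
      using sum.inter_filter[of "{..<h}" "\<lambda>i. MM j" "\<lambda>i. E i j"] by simp
    also have "\<dots> = real d * MM j" using card_nbr[OF j] by simp
    finally show "(\<Sum>i<h. if E i j then MM j else 0) = real d * MM j" .
  qed
  finally show ?thesis by (simp add: sum_distrib_left)
qed

lemma sum_MM: "(\<Sum>i<h. MM i) \<le> 10"
proof -
  have "(\<Sum>i<h. MM i) = (\<Sum>v\<in>BB. (wt n h (snd v))^2 * real (a v))"
    unfolding MM_def BB_def atLeast0LessThan by (simp add: sum.cartesian_product split_beta)
  also have "\<dots> = (\<Sum>v | a v \<noteq> 0. (wt n h (snd v))^2 * real (a v))"
    by (rule sum.mono_neutral_right[OF BB_fin]) (auto intro: supp_BB)
  also have "\<dots> \<le> 10" using pat unfolding is_pattern_def by blast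
  finally show ?thesis .
qed

lemma four: "(2::real)^(k*2) = 4^k"
proof -
  have "(2::real)^(k*2) = (2^2)^k" by (simp only: mult.commute[of k 2] power_mult)
  thus ?thesis by simp
qed

lemma per_i_Phi: "(\<Sum>k\<in>KK. Phi (i,k)) \<le> sqrt (3/2 * L) * (13 * sqrt 2) * sqrt (YY i * MM i)"
proof -
  define X where "X = (\<Sum>k\<in>KK. 4^k * (real (a (i,k)) / real n))"
  have X0: "0 \<le> X" unfolding X_def by (intro sum_nonneg) auto
  have MX: "MM i = cc^2 * real n * X"
    unfolding MM_def X_def wt_eq using npos
    by (simp add: sum_distrib_left power_mult_distrib field_simps four flip: power_mult)
  have "(\<Sum>k\<in>KK. Phi (i,k)) = sqrt (3/2 * L) * sqrt (YY i / real n) * real n * cc *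
          (\<Sum>k\<in>KK. 2^k * phi (real (a (i,k)) / real n))"
    unfolding Phi_def wt_eq by (simp add: sum_distrib_left mult_ac)
  also have "\<dots> \<le> sqrt (3/2 * L) * sqrt (YY i / real n) * real n * cc * (13 * sqrt 2 * sqrt X)"
    unfolding X_def using cc_pos YY_nonneg[of i] L20
    by (intro mult_left_mono per_i) (auto simp: al_bounds KK_def)
  also have "\<dots> = sqrt (3/2 * L) * (13 * sqrt 2) * sqrt (YY i / real n * (real n * cc)^2 * X)"
  proof -
    have "sqrt (YY i / real n * (real n * cc)^2 * X) = sqrt (YY i / real n) * sqrt ((real n * cc)^2) * sqrt X"
      by (simp only: real_sqrt_mult)
    also have "sqrt ((real n * cc)^2) = real n * cc" using cc_pos by simp
    finally show ?thesis by (simp add: mult_ac)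
  qed
  also have "YY i / real n * (real n * cc)^2 * X = YY i * MM i"
    unfolding MX using npos by (simp add: power2_eq_square field_simps)
  finally show ?thesis .
qed

lemma sum_Phi: "(\<Sum>v\<in>BB. Phi v) \<le> 55 * L * sqrt (real d)"
proof -
  define sd' where "sd' = sqrt (real d)"
  have sd0: "sd' > 0" unfolding sd'_def using d2 by simp
  have sdsq: "sd' * sd' = real d" unfolding sd'_def by simp
  define C where "C = sqrt (3/2 * L) * (13 * sqrt 2)"
  have C0: "C \<ge> 0" unfolding C_def using L20 by simp
  have "(\<Sum>v\<in>BB. Phi v) = (\<Sum>i<h. \<Sum>k\<in>KK. Phi (i,k))"
    unfolding BB_def atLeast0LessThan by (simp add: sum.cartesian_product)
  also have "\<dots> \<le> (\<Sum>i<h. C * sqrt (YY i * MM i))"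
    unfolding C_def by (intro sum_mono per_i_Phi)
  also have "\<dots> \<le> (\<Sum>i<h. C * ((sd' * MM i + YY i / sd') / 2))"
  proof (intro sum_mono mult_left_mono C0)
    fix i
    have "sqrt (YY i * MM i) = sqrt ((sd' * MM i) * (YY i / sd'))" using sd0 by simp
    also have "\<dots> \<le> (sd' * MM i + YY i / sd') / 2"
      using sd0 MM_nonneg[of i] YY_nonneg[of i] by (intro arith_geo_mean_sqrt) auto
    finally show "sqrt (YY i * MM i) \<le> (sd' * MM i + YY i / sd') / 2" .
  qed
  also have "\<dots> = (\<Sum>i<h. C / 2 * (sd' * MM i + YY i / sd'))" by (intro sum.cong) auto
  also have "\<dots> = C / 2 * (\<Sum>i<h. sd' * MM i + YY i / sd')" by (rule sum_distrib_left[symmetric])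
  also have "\<dots> = C / 2 * (sd' * (\<Sum>i<h. MM i) + (\<Sum>i<h. YY i) / sd')"
    by (simp add: sum.distrib sum_distrib_left sum_divide_distrib)
  also have "\<dots> = C * sd' * (\<Sum>i<h. MM i)"
    unfolding sum_YY sdsq[symmetric] using sd0 by (simp add: field_simps)
  also have "\<dots> \<le> C * sd' * 10" using sum_MM C0 sd0 by (intro mult_left_mono) auto
  also have "\<dots> \<le> 55 * L * sd'"
  proof -
    have "C * 10 \<le> 55 * L"
    proof -
      have "(C * 10)^2 = 3/2 * L * 33800" unfolding C_def using L20 by (simp add: power_mult_distrib)
      also have "\<dots> \<le> (55 * L)^2" using L20 by (simp add: power2_eq_square)
      finally have "(C * 10)^2 \<le> (55 * L)^2" .
      thus ?thesis by (rule power2_le_imp_le) (use L20 in auto)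
    qed
    thus ?thesis using sd0 by (simp add: mult_right_mono mult_ac)
  qed
  finally show ?thesis unfolding sd'_def .
qed

lemma pSD_full: "p_SD E d n h a e = \<bar>1/2 * FF sd tt BB\<bar>"
proof -
  have "(\<Sum>\<^sub>\<infinity>(v, v')\<in>{(v, v'). sd v v'}. wt n h (snd v) * wt n h (snd v') * real (a v) * real (a v') / real n * eps n a e v v')
     = FF sd tt BB"
    unfolding tt_def[symmetric]
    by (rule infsum_pairs[OF BB_fin]) (auto simp: tt_def supp_BB')
  thus ?thesis unfolding p_SD_def by simp
qed

lemma pSD_sub: assumes S: "S \<subseteq> BB"
  shows "p_SD E d n h (sub_a S a) (sub_e S e) = \<bar>1/2 * FF sd tt S\<bar>"
proof -
  have Sf: "finite S" using S BB_fin finite_subset by auto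
  let ?P = "sd_edge E d n h (sub_a S a) (sub_e S e)"
  let ?g = "\<lambda>v v'. wt n h (snd v) * wt n h (snd v') * real (sub_a S a v) * real (sub_a S a v') / real n * eps n (sub_a S a) (sub_e S e) v v'"
  have "(\<Sum>\<^sub>\<infinity>(v, v')\<in>{(v, v'). ?P v v'}. ?g v v') = FF ?P ?g S"
    by (rule infsum_pairs[OF Sf]) (auto simp: sub_a_def)
  also have "\<dots> = FF sd tt S"
  proof -
    have e: "eps n (sub_a S a) (sub_e S e) x y = eps n a e x y" if "x \<in> S" "y \<in> S" for x y
      using that unfolding eps_def sub_a_def sub_e_def by simp
    show ?thesis unfolding FF_def
      by (intro sum.cong refl) (auto simp: e sd_edge_def tt_def sub_a_def)
  qed
  finally show ?thesis unfolding p_SD_def by simp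
qed

lemma deg: assumes S: "S \<subseteq> BB"
  shows "(\<Sum>\<^sub>\<infinity>v' \<in> {v'. sd v v'} \<inter> S. real (a v) * real (a v') / real n * (eps n a e v v')\<^sup>2 / 15) = DD S v"
proof -
  have Sf: "finite S" using S BB_fin finite_subset by auto
  have "{v'. sd v v'} \<inter> S = {y\<in>S. sd v y}" by auto
  hence "(\<Sum>\<^sub>\<infinity>v' \<in> {v'. sd v v'} \<inter> S. real (a v) * real (a v') / real n * (eps n a e v v')\<^sup>2 / 15)
     = (\<Sum>v' \<in> {y\<in>S. sd v y}. real (a v) * real (a v') / real n * (eps n a e v v')\<^sup>2 / 15)"
    using Sf by simp
  also have "\<dots> = DD S v" unfolding DD_def by (rule sum.inter_filter[OF Sf])
  finally show ?thesis .
qed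

lemma main_pos:
  "\<exists>S \<subseteq> {0..<h} \<times> (UNIV :: nat set).
     p_SD E d n h (sub_a S a) (sub_e S e) \<ge> p_SD E d n h a e - 55 * L * sqrt (real d) \<and>
     (\<forall>v \<in> S. (\<Sum>\<^sub>\<infinity>v' \<in> {v'. sd_edge E d n h a e v v'} \<inter> S.
          real (a v) * real (a v') / real n * (eps n a e v v')\<^sup>2 / 15)
        \<ge> (if a v = 0 then 0 else L / 10 * real (a v) * ln (exp 1 * real n / real (a v))))"
proof -
  obtain S where S: "S \<subseteq> BB" "\<forall>v\<in>S. TT v \<le> DD S v"
    "\<bar>FF sd tt BB - FF sd tt S\<bar> \<le> 2 * (\<Sum>v\<in>BB - S. Phi v)"
    using core[OF BB_fin, of sd tt Phi "\<lambda>U v. TT v \<le> DD U v" BB] sd_irr sd_sym Phi_nonneg step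
    by blast
  have "(\<Sum>v\<in>BB - S. Phi v) \<le> (\<Sum>v\<in>BB. Phi v)"
    using Phi_nonneg by (intro sum_mono2[OF BB_fin]) auto
  hence "\<bar>FF sd tt BB - FF sd tt S\<bar> \<le> 2 * (55 * L * sqrt (real d))" using S(3) sum_Phi by linarith
  hence "p_SD E d n h (sub_a S a) (sub_e S e) \<ge> p_SD E d n h a e - 55 * L * sqrt (real d)"
    unfolding pSD_sub[OF S(1)] pSD_full by (simp add: abs_le_iff abs_if split: if_splits) linarith?
  moreover have "S \<subseteq> {0..<h} \<times> (UNIV :: nat set)" using S(1) unfolding BB_def by auto
  moreover have "\<forall>v \<in> S. (\<Sum>\<^sub>\<infinity>v' \<in> {v'. sd_edge E d n h a e v v'} \<inter> S.
          real (a v) * real (a v') / real n * (eps n a e v v')\<^sup>2 / 15)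
        \<ge> (if a v = 0 then 0 else L / 10 * real (a v) * ln (exp 1 * real n / real (a v)))"
    using S(2) unfolding deg[OF S(1)] TT_def by blast
  ultimately show ?thesis by blast
qed

end

theorem proposition5p3:
  fixes d h n :: nat and L :: real and E :: "nat \<Rightarrow> nat \<Rightarrow> bool"
    and a :: "nat \<times> nat \<Rightarrow> nat" and e :: "nat \<times> nat \<Rightarrow> nat \<times> nat \<Rightarrow> nat"
  assumes "d \<ge> 2"
    and "regular_graph h d E"
    and "L \<ge> 20"
    and "is_pattern E d n h a e"
  shows "\<exists>S \<subseteq> {0..<h} \<times> (UNIV :: nat set).
     p_SD E d n h (sub_a S a) (sub_e S e) \<ge> p_SD E d n h a e - 55 * L * sqrt (real d) \<and>
     (\<forall>v \<in> S. (\<Sum>\<^sub>\<infinity>v' \<in> {v'. sd_edge E d n h a e v v'} \<inter> S.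
          real (a v) * real (a v') / real n * (eps n a e v v')\<^sup>2 / 15)
        \<ge> (if a v = 0 then 0 else L / 10 * real (a v) * ln (exp 1 * real n / real (a v))))"
  proof (cases "n = 0 \<or> h = 0")
  case True
  have z1: "p_SD E d n h (sub_a {} a) (sub_e {} e) = 0"
    unfolding p_SD_def sub_a_def by (simp add: case_prod_unfold)
  have z2: "p_SD E d n h a e = 0"
  proof -
    have "\<forall>v v'. wt n h (snd v) * wt n h (snd v') * real (a v) * real (a v') / real n * eps n a e v v' = 0"
    proof (intro allI)
      fix v v' :: "nat \<times> nat"
      show "wt n h (snd v) * wt n h (snd v') * real (a v) * real (a v') / real n * eps n a e v v' = 0"
      proof (cases "n = 0")
        case True thus ?thesis by (simp add: wt_def)
      next
        case False
        hence "h = 0" using \<open>n = 0 \<or> h = 0\<close> by simp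
        hence "a v = 0" using assms(4) unfolding is_pattern_def by (metis le0 prod.collapse)
        thus ?thesis by simp
      qed
    qed
    hence "(\<lambda>(v, v'). wt n h (snd v) * wt n h (snd v') * real (a v) * real (a v') / real n * eps n a e v v') = (\<lambda>_. 0)"
      by (auto simp: fun_eq_iff)
    thus ?thesis unfolding p_SD_def by simp
  qed
  show ?thesis using z1 z2 assms(3) by (intro exI[of _ "{}"]) auto
next
  case False
  show ?thesis by (rule main_pos[OF assms]) (use False in auto)
qed

end
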